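(* Let $(G,+)$ be an abelian group with identity $0$. Let $M$ be any matroid over $G$ and let $N$ be a uniform matroid over $G$, both of the same rank $n$, such that $0\notin E(N)$. If $|E(M)|\le |E(N)|<p(G)$, then $M$ is matched to $N$.
   Context: $p(G)$ denotes the smallest cardinality of a nonzero subgroup of $G$. A matroid over $G$ is a matroid $M$ whose finite ground set $E(M)$ is a subset of $G$; all matroids are assumed loopless. A uniform matroid of rank $n$ is one in which the independent sets are exactly the subsets of the ground set of size at most $n$. For matroids $M,N$ over $G$ with $r(M)=r(N)=n>0$ and bases $\mathcal{M}=\{a_1,\dots,a_n\}$ of $M$ and $\mathcal{N}=\{b_1,\dots,b_n\}$ of $N$, $\mathcal{M}$ is matched to $\mathcal{N}$ if there is a permutation $\pi\in S_n$ with $a_i+b_{\pi(i)}\notin E(M)$ for all $i$. $M$ is matched to $N$ if for every basis $\mathcal{M}$ of $M$ there exists a basis $\mathcal{N}$ of $N$ such that $\mathcal{M}$ is matched to $\mathcal{N}$. *)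

theory Defs
  imports Main "HOL-Library.Extended_Nat"
begin

definition matroid :: "'a set \<Rightarrow> ('a set \<Rightarrow> bool) \<Rightarrow> bool" where
  "matroid E indep \<longleftrightarrow>
     finite E \<and>
     indep {} \<and>
     (\<forall>X. indep X \<longrightarrow> X \<subseteq> E) \<and>
     (\<forall>X Y. indep Y \<longrightarrow> X \<subseteq> Y \<longrightarrow> indep X) \<and>
     (\<forall>X Y. indep X \<longrightarrow> indep Y \<longrightarrow> card X < card Y \<longrightarrow>
        (\<exists>y \<in> Y - X. indep (insert y X)))"

definition loopless :: "'a set \<Rightarrow> ('a set \<Rightarrow> bool) \<Rightarrow> bool" where
  "loopless E indep \<longleftrightarrow> (\<forall>x \<in> E. indep {x})"

definition basis :: "('a set \<Rightarrow> bool) \<Rightarrow> 'a set \<Rightarrow> bool" where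
  "basis indep B \<longleftrightarrow> indep B \<and> (\<forall>X. indep X \<longrightarrow> B \<subseteq> X \<longrightarrow> X = B)"

definition matroid_rank :: "'a set \<Rightarrow> ('a set \<Rightarrow> bool) \<Rightarrow> nat" where
  "matroid_rank E indep = Max {card X | X. X \<subseteq> E \<and> indep X}"

definition uniform_matroid :: "'a set \<Rightarrow> ('a set \<Rightarrow> bool) \<Rightarrow> bool" where
  "uniform_matroid E indep \<longleftrightarrow> (\<exists>k. \<forall>X. indep X \<longleftrightarrow> X \<subseteq> E \<and> card X \<le> k)"

definition add_subgroup :: "'a::ab_group_add set \<Rightarrow> bool" where
  "add_subgroup H \<longleftrightarrow> 0 \<in> H \<and> (\<forall>x\<in>H. \<forall>y\<in>H. x + y \<in> H) \<and> (\<forall>x\<in>H. - x \<in> H)"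

definition p_group :: "'a::ab_group_add itself \<Rightarrow> enat" where
  "p_group _ = (INF H \<in> {H :: 'a set. add_subgroup H \<and> H \<noteq> {0}}.
                  (if finite H then enat (card H) else \<infinity>))"

definition basis_matched :: "'a::ab_group_add set \<Rightarrow> 'a set \<Rightarrow> 'a set \<Rightarrow> bool" where
  "basis_matched EM A B \<longleftrightarrow> (\<exists>f. bij_betw f A B \<and> (\<forall>a\<in>A. a + f a \<notin> EM))"

definition matched_to ::
  "'a::ab_group_add set \<Rightarrow> ('a set \<Rightarrow> bool) \<Rightarrow> 'a set \<Rightarrow> ('a set \<Rightarrow> bool) \<Rightarrow> bool" where
  "matched_to EM IM EN IN \<longleftrightarrow>
     (\<forall>A. basis IM A \<longrightarrow> (\<exists>B. basis IN B \<and> basis_matched EM A B))"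

end

theory Submission
  imports Defs
begin


lemma hall:
  fixes I :: "'i set" and N :: "'i \<Rightarrow> 'b set"
  shows "finite I \<Longrightarrow> (\<forall>i\<in>I. finite (N i)) \<Longrightarrow> (\<forall>S\<subseteq>I. card S \<le> card (\<Union>(N ` S)))
    \<Longrightarrow> \<exists>f. inj_on f I \<and> (\<forall>i\<in>I. f i \<in> N i)"
proof (induction "card I" arbitrary: I N rule: less_induct)
  case less
  note fin = less.prems(1) and finN = less.prems(2) and H = less.prems(3)
  show ?case
  proof (cases "I = {}")
    case True then show ?thesis by auto
  next
    case False
    show ?thesis
    proof (cases "\<exists>S. S \<noteq> {} \<and> S \<subset> I \<and> card (\<Union>(N`S)) \<le> card S")
      case True
      then obtain S where S: "S \<noteq> {}" "S \<subset> I" "card (\<Union>(N`S)) \<le> card S" by blast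
      have finS: "finite S" using S fin finite_subset by blast
      have cS: "card S < card I" using S fin psubset_card_mono by blast
      have hS1: "\<forall>i\<in>S. finite (N i)" using finN S by auto
      have hS2: "\<forall>T\<subseteq>S. card T \<le> card (\<Union>(N ` T))" using H S by auto
      have "\<exists>g. inj_on g S \<and> (\<forall>i\<in>S. g i \<in> N i)"
        by (rule less.hyps[OF cS finS hS1 hS2])
      then obtain g where g: "inj_on g S" "\<forall>i\<in>S. g i \<in> N i" by blast
      define U where "U = \<Union>(N`S)"
      have finU: "finite U" unfolding U_def using finS finN S by auto
      define I2 where "I2 = I - S"
      define N2 where "N2 = (\<lambda>i. N i - U)"
      have fin2: "finite I2" using fin I2_def by auto
      have c2: "card I2 < card I" unfolding I2_def using S fin
      proof -
        have "card (I - S) = card I - card S" using S finS by (simp add: card_Diff_subset)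
        moreover have "card S > 0" using S finS by (simp add: card_gt_0_iff)
        moreover have "card S \<le> card I" using S fin by (simp add: card_mono)
        ultimately show "card (I - S) < card I" by linarith
      qed
      have H2: "\<forall>T\<subseteq>I2. card T \<le> card (\<Union>(N2 ` T))"
      proof (intro allI impI)
        fix T assume T: "T \<subseteq> I2"
        have finT: "finite T" using T fin2 finite_subset by blast
        have disj: "T \<inter> S = {}" using T I2_def by auto
        have "T \<union> S \<subseteq> I" using T S I2_def by auto
        hence a1: "card (T \<union> S) \<le> card (\<Union>(N ` (T \<union> S)))" using H by blast
        have a2: "card (T \<union> S) = card T + card S" using card_Un_disjoint[OF finT finS disj] .
        have a3: "\<Union>(N ` (T \<union> S)) = (\<Union>(N2 ` T)) \<union> U" unfolding N2_def U_def by auto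
        have a4: "finite (\<Union>(N2 ` T))" unfolding N2_def using finT finN T I2_def by auto
        have a5: "(\<Union>(N2 ` T)) \<inter> U = {}" unfolding N2_def by auto
        have a6: "card ((\<Union>(N2 ` T)) \<union> U) = card (\<Union>(N2 ` T)) + card U"
          by (rule card_Un_disjoint[OF a4 finU a5])
        have a7: "card U \<le> card S" using S(3) U_def by simp
        have a8: "card (\<Union>(N ` (T \<union> S))) = card (\<Union>(N2 ` T)) + card U" using a3 a6 by simp
        from a1 a2 a8 a7 have "card T + card S \<le> card (\<Union>(N2 ` T)) + card S" by linarith
        then show "card T \<le> card (\<Union>(N2 ` T))" by linarith
      qed
      have "\<forall>i\<in>I2. finite (N2 i)" using finN I2_def N2_def by auto
      then have "\<exists>h. inj_on h I2 \<and> (\<forall>i\<in>I2. h i \<in> N2 i)"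
        by (rule less.hyps[OF c2 fin2 _ H2])
      then obtain h where h: "inj_on h I2" "\<forall>i\<in>I2. h i \<in> N2 i" by blast
      define f where "f = (\<lambda>i. if i \<in> S then g i else h i)"
      have "inj_on f I"
      proof (rule inj_onI)
        fix i j assume ij: "i \<in> I" "j \<in> I" "f i = f j"
        show "i = j"
        proof (cases "i \<in> S"; cases "j \<in> S")
          assume "i \<in> S" "j \<in> S" then show ?thesis using ij g(1) f_def by (auto dest: inj_onD)
        next
          assume "i \<in> S" "j \<notin> S"
          then have "g i \<in> U" "h j \<notin> U" using g h ij I2_def N2_def U_def by auto
          then show ?thesis using ij f_def \<open>i \<in> S\<close> \<open>j \<notin> S\<close> by auto
        next
          assume "i \<notin> S" "j \<in> S"
          then have "g j \<in> U" "h i \<notin> U" using g h ij I2_def N2_def U_def by auto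
          then show ?thesis using ij f_def \<open>i \<notin> S\<close> \<open>j \<in> S\<close> by auto
        next
          assume "i \<notin> S" "j \<notin> S"
          then show ?thesis using ij h(1) f_def I2_def by (auto dest: inj_onD)
        qed
      qed
      moreover have "\<forall>i\<in>I. f i \<in> N i" using g h f_def I2_def N2_def by auto
      ultimately show ?thesis by blast
    next
      case False
      hence strict: "\<And>S. S \<noteq> {} \<Longrightarrow> S \<subset> I \<Longrightarrow> card S < card (\<Union>(N`S))" using False by (auto simp: not_le)
      obtain i0 where i0: "i0 \<in> I" using \<open>I \<noteq> {}\<close> by blast
      have "card {i0} \<le> card (\<Union>(N ` {i0}))" using H i0 by blast
      hence "N i0 \<noteq> {}" by auto
      then obtain x where x: "x \<in> N i0" by blast
      define I2 where "I2 = I - {i0}"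
      define N2 where "N2 = (\<lambda>i. N i - {x})"
      have fin2: "finite I2" using fin I2_def by auto
      have c2: "card I2 < card I" unfolding I2_def by (rule card_Diff1_less[OF fin i0])
      have H2: "\<forall>T\<subseteq>I2. card T \<le> card (\<Union>(N2 ` T))"
      proof (intro allI impI)
        fix T assume T: "T \<subseteq> I2"
        show "card T \<le> card (\<Union>(N2 ` T))"
        proof (cases "T = {}")
          case True then show ?thesis by simp
        next
          case False
          have finT: "finite T" using T fin2 finite_subset by blast
          have "T \<subset> I" using T I2_def i0 by auto
          hence lt: "card T < card (\<Union>(N`T))" using strict False by blast
          have eq: "\<Union>(N2 ` T) = \<Union>(N`T) - {x}" unfolding N2_def by auto
          have "card (\<Union>(N`T)) - card {x} \<le> card (\<Union>(N`T) - {x})" by (rule diff_card_le_card_Diff) simp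
          hence "card (\<Union>(N`T)) \<le> card (\<Union>(N`T) - {x}) + 1" by simp
          then show ?thesis using lt unfolding eq by linarith
        qed
      qed
      have "\<forall>i\<in>I2. finite (N2 i)" using finN I2_def N2_def by auto
      then have "\<exists>h. inj_on h I2 \<and> (\<forall>i\<in>I2. h i \<in> N2 i)"
        by (rule less.hyps[OF c2 fin2 _ H2])
      then obtain h where h: "inj_on h I2" "\<forall>i\<in>I2. h i \<in> N2 i" by blast
      define f where "f = h(i0 := x)"
      have "inj_on f I"
      proof -
        have "inj_on f I2" using h(1) unfolding f_def I2_def by (simp add: inj_on_def)
        moreover have "f i0 \<notin> f ` I2" using h(2) unfolding f_def I2_def N2_def by auto
        moreover have "I = insert i0 I2" using i0 I2_def by auto
        ultimately have "inj_on f (insert i0 I2)" unfolding inj_on_insert by blast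
        then show ?thesis using \<open>I = insert i0 I2\<close> by simp
      qed
      moreover have "\<forall>i\<in>I. f i \<in> N i" using h x f_def I2_def N2_def by auto
      ultimately show ?thesis by blast
    qed
  qed
qed



definition sumset :: "'a::ab_group_add set \<Rightarrow> 'a set \<Rightarrow> 'a set" where
  "sumset X Y = {x + y | x y. x \<in> X \<and> y \<in> Y}"

lemma p_group_le:
  fixes H :: "'a::ab_group_add set"
  assumes "add_subgroup H" "H \<noteq> {0}" "finite H"
  shows "p_group TYPE('a) \<le> enat (card H)"
proof -
  have "p_group TYPE('a) \<le> (if finite H then enat (card H) else \<infinity>)"
    unfolding p_group_def by (rule INF_lower) (use assms in auto)
  then show ?thesis using assms by simp
qed

lemma stab_bound:
  fixes X :: "'a::ab_group_add set"
  assumes finX: "finite X" and a: "a \<in> X" and d: "d \<noteq> 0" and dX: "\<forall>x\<in>X. x + d \<in> X"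
  shows "p_group TYPE('a) \<le> enat (card X)"
proof -
  define H where "H = {h. (\<lambda>x. x + h) ` X = X}"
  have inj: "\<And>h. inj_on (\<lambda>x. x + h) X" by (simp add: inj_on_def)
  have dH: "d \<in> H"
  proof -
    have sub: "(\<lambda>x. x + d) ` X \<subseteq> X" using dX by auto
    have "card ((\<lambda>x. x + d) ` X) = card X" using card_image[OF inj] .
    then show ?thesis using card_subset_eq[OF finX sub] H_def by simp
  qed
  have sg: "add_subgroup H"
    unfolding add_subgroup_def
  proof (intro conjI ballI)
    show "0 \<in> H" unfolding H_def by simp
  next
    fix h1 h2 assume "h1 \<in> H" "h2 \<in> H"
    then have "(\<lambda>x. x + h2) ` ((\<lambda>x. x + h1) ` X) = X" unfolding H_def by simp
    moreover have "(\<lambda>x. x + h2) ` ((\<lambda>x. x + h1) ` X) = (\<lambda>x. x + (h1 + h2)) ` X"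
      by (simp add: image_image add.assoc)
    ultimately show "h1 + h2 \<in> H" unfolding H_def by simp
  next
    fix h assume "h \<in> H"
    then have "(\<lambda>x. x + - h) ` ((\<lambda>x. x + h) ` X) = (\<lambda>x. x + - h) ` X" unfolding H_def by simp
    moreover have "(\<lambda>x. x + - h) ` ((\<lambda>x. x + h) ` X) = X"
      by (simp add: image_image)
    ultimately show "- h \<in> H" unfolding H_def by simp
  qed
  have Hsub: "H \<subseteq> (\<lambda>x. x - a) ` X"
  proof
    fix h assume "h \<in> H"
    then have "a + h \<in> X" using a unfolding H_def by blast
    then show "h \<in> (\<lambda>x. x - a) ` X" by (rule rev_image_eqI) simp
  qed
  have finH: "finite H" using Hsub finX finite_subset by blast
  have "card H \<le> card ((\<lambda>x. x - a) ` X)" using Hsub finX by (simp add: card_mono)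
  also have "\<dots> \<le> card X" using card_image_le finX by blast
  finally have "card H \<le> card X" .
  moreover have "H \<noteq> {0}" using dH d by auto
  ultimately show ?thesis using p_group_le[OF sg _ finH] by (meson enat_ord_simps(1) order_trans)
qed

lemma cauchy_davenport:
  fixes Y X :: "'a::ab_group_add set"
  shows "finite Y \<Longrightarrow> Y \<noteq> {} \<Longrightarrow> finite X \<Longrightarrow> X \<noteq> {} \<Longrightarrow>
    card X + card Y - 1 \<le> card (sumset X Y) \<or> p_group TYPE('a) \<le> enat (card (sumset X Y))"
proof (induction "card Y" arbitrary: X Y rule: less_induct)
  case less
  note finY = less.prems(1) and neY = less.prems(2) and finX = less.prems(3) and neX = less.prems(4)
  have finS: "finite (sumset X Y)"
  proof -
    have "sumset X Y = (\<lambda>(x,y). x + y) ` (X \<times> Y)" unfolding sumset_def by auto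
    then show ?thesis using finX finY by simp
  qed
  obtain b1 where b1: "b1 \<in> Y" using neY by blast
  have cX: "card X \<le> card (sumset X Y)"
  proof -
    have "(\<lambda>x. x + b1) ` X \<subseteq> sumset X Y" unfolding sumset_def using b1 by auto
    moreover have "card ((\<lambda>x. x + b1) ` X) = card X" by (rule card_image) (simp add: inj_on_def)
    ultimately show ?thesis using finS card_mono by metis
  qed
  show ?case
  proof (cases "card Y = 1")
    case True then show ?thesis using cX by simp
  next
    case False
    have Yb: "Y - {b1} \<noteq> {}"
    proof
      assume "Y - {b1} = {}"
      then have "Y = {b1}" using b1 by blast
      then show False using False by simp
    qed
    show ?thesis
    proof (cases "\<exists>a\<in>X. \<exists>b\<in>Y. \<exists>y\<in>Y. y + (a - b) \<notin> X")
      case True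
      then obtain a b y where aby: "a \<in> X" "b \<in> Y" "y \<in> Y" "y + (a - b) \<notin> X" by blast
      define e where "e = a - b"
      define X' where "X' = X \<union> (\<lambda>y. y + e) ` Y"
      define Y' where "Y' = {y \<in> Y. y + e \<in> X}"
      have finY': "finite Y'" using finY Y'_def by simp
      have neY': "Y' \<noteq> {}" using aby unfolding Y'_def e_def by (intro ex_in_conv[THEN iffD1] exI[of _ b]) auto
      have finX': "finite X'" using finX finY X'_def by simp
      have neX': "X' \<noteq> {}" using neX X'_def by simp
      have lt: "card Y' < card Y"
      proof (rule psubset_card_mono[OF finY])
        show "Y' \<subset> Y" using aby unfolding Y'_def e_def by auto
      qed
      have IH: "card X' + card Y' - 1 \<le> card (sumset X' Y') \<or> p_group TYPE('a) \<le> enat (card (sumset X' Y'))"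
        using less.hyps[OF lt finY' neY' finX' neX'] .
      have img: "X \<inter> (\<lambda>y. y + e) ` Y = (\<lambda>y. y + e) ` Y'" unfolding Y'_def by auto
      have injY: "inj_on (\<lambda>y. y + e) A" for A by (simp add: inj_on_def)
      have "card X' + card (X \<inter> (\<lambda>y. y + e) ` Y) = card X + card ((\<lambda>y. y + e) ` Y)"
        unfolding X'_def using card_Un_Int[of X "(\<lambda>y. y + e) ` Y"] finX finY by simp
      then have ceq: "card X' + card Y' = card X + card Y"
        unfolding img card_image[OF injY] .
      have sub: "sumset X' Y' \<subseteq> sumset X Y"
      proof
        fix z assume "z \<in> sumset X' Y'"
        then obtain x y where z: "z = x + y" "x \<in> X'" "y \<in> Y'" unfolding sumset_def by blast
        show "z \<in> sumset X Y"
        proof (cases "x \<in> X")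
          case True then show ?thesis using z Y'_def unfolding sumset_def by auto
        next
          case False
          then obtain y' where y': "y' \<in> Y" "x = y' + e" using z X'_def by auto
          have "z = (y + e) + y'" using z y' by (simp add: algebra_simps)
          moreover have "y + e \<in> X" "y \<in> Y" using z Y'_def by auto
          ultimately show ?thesis using y' unfolding sumset_def by blast
        qed
      qed
      have "card (sumset X' Y') \<le> card (sumset X Y)" using card_mono[OF finS sub] .
      then show ?thesis using IH ceq by (metis enat_ord_simps(1) order_trans)
    next
      case False
      then have all: "\<forall>a\<in>X. \<forall>b\<in>Y. \<forall>y\<in>Y. y + (a - b) \<in> X" by blast
      obtain b2 where b2: "b2 \<in> Y" "b2 \<noteq> b1" using Yb by blast
      define d where "d = b1 - b2"
      have d0: "d \<noteq> 0" using b2 d_def by simp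
      have dX: "\<forall>x\<in>X. x + d \<in> X"
      proof
        fix x assume "x \<in> X"
        then have "b1 + (x - b2) \<in> X" using all b1 b2 by blast
        then show "x + d \<in> X" unfolding d_def by (simp add: algebra_simps)
      qed
      obtain a where "a \<in> X" using neX by blast
      have "p_group TYPE('a) \<le> enat (card X)" by (rule stab_bound[OF finX \<open>a \<in> X\<close> d0 dX])
      then show ?thesis using cX by (metis enat_ord_simps(1) order_trans)
    qed
  qed
qed


lemma rank_facts:
  assumes "matroid E I"
  shows "\<exists>X. I X \<and> card X = matroid_rank E I" and "\<And>X. I X \<Longrightarrow> card X \<le> matroid_rank E I"
proof -
  let ?C = "{card X | X. X \<subseteq> E \<and> I X}"
  have finE: "finite E" and sub: "\<And>X. I X \<Longrightarrow> X \<subseteq> E" and e: "I {}"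
    using assms unfolding matroid_def by auto
  have "?C \<subseteq> {..card E}" using finE card_mono by fastforce
  hence finC: "finite ?C" using finite_subset by blast
  have neC: "?C \<noteq> {}" using e by blast
  have "matroid_rank E I \<in> ?C" unfolding matroid_rank_def using Max_in[OF finC neC] .
  then show "\<exists>X. I X \<and> card X = matroid_rank E I" by auto
  fix X assume "I X"
  then have "card X \<in> ?C" using sub by blast
  then show "card X \<le> matroid_rank E I" unfolding matroid_rank_def using Max_ge[OF finC] by blast
qed

theorem proposition2p8:
  fixes EM EN :: "'a::ab_group_add set"
    and IM IN :: "'a set \<Rightarrow> bool"
    and n :: nat
  assumes "matroid EM IM" and "loopless EM IM"
    and "matroid EN IN" and "loopless EN IN"
    and "uniform_matroid EN IN"
    and "matroid_rank EM IM = n" and "matroid_rank EN IN = n" and "n > 0"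
    and "0 \<notin> EN"
    and "card EM \<le> card EN"
    and "enat (card EN) < p_group TYPE('a)"
  shows "matched_to EM IM EN IN"
  unfolding matched_to_def
proof (intro allI impI)
  fix A assume bA: "basis IM A"
  note mM = assms(1) and mN = assms(3)
  have finEM: "finite EM" and subM: "\<And>X. IM X \<Longrightarrow> X \<subseteq> EM"
    and exch: "\<And>X Y. IM X \<Longrightarrow> IM Y \<Longrightarrow> card X < card Y \<Longrightarrow> \<exists>y\<in>Y - X. IM (insert y X)"
    using mM unfolding matroid_def by auto
  have finEN: "finite EN" and subN: "\<And>X. IN X \<Longrightarrow> X \<subseteq> EN"
    using mN unfolding matroid_def by auto
  have IMA: "IM A" and maxA: "\<And>X. IM X \<Longrightarrow> A \<subseteq> X \<Longrightarrow> X = A" using bA unfolding basis_def by auto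
  have AEM: "A \<subseteq> EM" using subM IMA .
  have finA: "finite A" using AEM finEM finite_subset by blast
  have cardA: "card A = n"
  proof (rule ccontr)
    assume ne: "card A \<noteq> n"
    have "card A \<le> n" using rank_facts(2)[OF mM IMA] assms(6) by simp
    with ne have lt: "card A < n" by simp
    obtain X where X: "IM X" "card X = n" using rank_facts(1)[OF mM] assms(6) by auto
    obtain y where y: "y \<in> X - A" "IM (insert y A)" using exch[OF IMA X(1)] lt X(2) by auto
    have "insert y A = A" using maxA[OF y(2)] by blast
    then show False using y(1) by blast
  qed
  obtain k where k: "\<And>X. IN X \<longleftrightarrow> X \<subseteq> EN \<and> card X \<le> k"
    using assms(5) unfolding uniform_matroid_def by blast
  have nk: "n \<le> k"
  proof -
    obtain X where X: "IN X" "card X = n" using rank_facts(1)[OF mN] assms(7) by auto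
    then show ?thesis using k by blast
  qed
  define Nf where "Nf = (\<lambda>a. {b \<in> EN. a + b \<notin> EM})"
  have hallc: "\<forall>S\<subseteq>A. card S \<le> card (\<Union>(Nf ` S))"
  proof (intro allI impI)
    fix S assume SA: "S \<subseteq> A"
    show "card S \<le> card (\<Union>(Nf ` S))"
    proof (rule ccontr)
      assume "\<not> card S \<le> card (\<Union>(Nf ` S))"
      hence ltS: "card (\<Union>(Nf ` S)) < card S" by simp
      have finS: "finite S" using SA finA finite_subset by blast
      have neS: "S \<noteq> {}" using ltS by auto
      define T where "T = {b \<in> EN. \<forall>a\<in>S. a + b \<in> EM}"
      have finT: "finite T" using finEN T_def by simp
      have finU: "finite (\<Union>(Nf ` S))" using finEN Nf_def finS by simp
      have "EN \<subseteq> (\<Union>(Nf ` S)) \<union> T" unfolding Nf_def T_def by auto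
      hence "card EN \<le> card ((\<Union>(Nf ` S)) \<union> T)" using finT finU by (simp add: card_mono)
      also have "\<dots> \<le> card (\<Union>(Nf ` S)) + card T" by (rule card_Un_le)
      finally have c1: "card EN < card S + card T" using ltS by linarith
      define T' where "T' = insert 0 T"
      have "0 \<notin> T" using assms(9) T_def by auto
      hence cT': "card T' = card T + 1" using finT T'_def by simp
      have finT': "finite T'" using finT T'_def by simp
      have neT': "T' \<noteq> {}" using T'_def by simp
      have ssub: "sumset S T' \<subseteq> EM"
      proof
        fix z assume "z \<in> sumset S T'"
        then obtain x y where z: "z = x + y" "x \<in> S" "y \<in> T'" unfolding sumset_def by blast
        show "z \<in> EM"
        proof (cases "y = 0")
          case True then show ?thesis using z SA AEM by auto
        next
          case False then show ?thesis using z T'_def T_def by auto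
        qed
      qed
      have cs: "card (sumset S T') \<le> card EN"
        using card_mono[OF finEM ssub] assms(10) by linarith
      have "card S + card T' - 1 \<le> card (sumset S T') \<or> p_group TYPE('a) \<le> enat (card (sumset S T'))"
        by (rule cauchy_davenport[OF finT' neT' finS neS])
      then show False
      proof
        assume "card S + card T' - 1 \<le> card (sumset S T')"
        then show False using cT' c1 cs by linarith
      next
        assume "p_group TYPE('a) \<le> enat (card (sumset S T'))"
        moreover have "enat (card (sumset S T')) \<le> enat (card EN)" using cs by simp
        ultimately show False using assms(11) by (meson leD order_trans)
      qed
    qed
  qed
  have "\<forall>i\<in>A. finite (Nf i)" using finEN Nf_def by simp
  from hall[OF finA this hallc] obtain f where f: "inj_on f A" "\<forall>a\<in>A. f a \<in> Nf a" by blast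
  define B where "B = f ` A"
  have bij: "bij_betw f A B" using f(1) B_def by (simp add: bij_betw_def)
  have cardB: "card B = n" using card_image[OF f(1)] cardA B_def by simp
  have BEN: "B \<subseteq> EN" using f(2) B_def Nf_def by auto
  have INB: "IN B" using k BEN cardB nk by simp
  have "basis IN B" unfolding basis_def
  proof (intro conjI allI impI)
    show "IN B" by (rule INB)
  next
    fix X assume X: "IN X" "B \<subseteq> X"
    have "card X \<le> n" using rank_facts(2)[OF mN X(1)] assms(7) by simp
    moreover have finX: "finite X" using subN[OF X(1)] finEN finite_subset by blast
    ultimately show "X = B" using card_subset_eq[OF finX X(2)] cardB card_mono[OF finX X(2)] by simp
  qed
  moreover have "basis_matched EM A B"
    unfolding basis_matched_def using bij f(2) Nf_def by blast
  ultimately show "\<exists>B. basis IN B \<and> basis_matched EM A B" by blast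
qed

end
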